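(* Let $E_1,E_2$ be vector spaces of the same finite dimension $n$ over a field $\mathbb{K}$, and let $\mathsf{P}(E_i)$ be the lattice of all subspaces of $E_i$. Then there is an injective map from the set $\mathbb{P}(E_1\otimes E_2)$ of one-dimensional subspaces of $E_1\otimes E_2$ to the set of atoms of $\mathsf{P}(E_1)\multimap\mathsf{P}(E_2):=(\mathsf{P}(E_1)\circledast\mathsf{P}(E_2)^{\mathrm{op}})^{\mathrm{op}}$.
   Context: Lattice notation: $\Sigma_i,\Sigma_i'$ atoms and coatoms; $\Sigma[a]$ atoms below $a$; $\mathsf{Cl}(\omega)=\{\Sigma[a];a\in\omega\}$; $\mathcal{L}^{\mathrm{op}}$ dual lattice. For complete atomistic coatomistic lattices $\mathcal{L}_1,\mathcal{L}_2$: $\Sigma'_\circledast$ is the set of $R\subsetneqq\Sigma_1\times\Sigma_2$ such that for all $(p_1,p_2)$, $\{q_1;(q_1,p_2)\in R\}\in\mathsf{Cl}(\Sigma_1'\cup\{1\})$ and $\{q_2;(p_1,q_2)\in R\}\in\mathsf{Cl}(\Sigma_2'\cup\{1\})$, and $\mathcal{L}_1\circledast\mathcal{L}_2:=\{\bigcap\omega;\omega\subseteq\Sigma'_\circledast\cup\{\Sigma_1\times\Sigma_2\}\}$ ordered by inclusion. *)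

theory Defs
  imports Complex_Main "HOL-Library.Function_Algebras"
begin

text \<open>A lattice is represented by a carrier set L and an order le on it.
  The dual lattice L^op is the same carrier with the reversed order.\<close>

definition lat_atoms :: "'x set \<Rightarrow> ('x \<Rightarrow> 'x \<Rightarrow> bool) \<Rightarrow> 'x set" where
  "lat_atoms L le = {a \<in> L. (\<exists>x\<in>L. le x a \<and> x \<noteq> a) \<and>
                          (\<forall>x\<in>L. le x a \<and> x \<noteq> a \<longrightarrow> (\<forall>y\<in>L. le x y))}"

definition dual_ord :: "('x \<Rightarrow> 'x \<Rightarrow> bool) \<Rightarrow> 'x \<Rightarrow> 'x \<Rightarrow> bool" where
  "dual_ord le = (\<lambda>x y. le y x)"

definition lat_coatoms :: "'x set \<Rightarrow> ('x \<Rightarrow> 'x \<Rightarrow> bool) \<Rightarrow> 'x set" where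
  "lat_coatoms L le = lat_atoms L (dual_ord le)"

definition lat_top :: "'x set \<Rightarrow> ('x \<Rightarrow> 'x \<Rightarrow> bool) \<Rightarrow> 'x" where
  "lat_top L le = (THE t. t \<in> L \<and> (\<forall>x\<in>L. le x t))"

definition atoms_below :: "'x set \<Rightarrow> ('x \<Rightarrow> 'x \<Rightarrow> bool) \<Rightarrow> 'x \<Rightarrow> 'x set" where
  "atoms_below L le a = {p \<in> lat_atoms L le. le p a}"

definition lat_Cl :: "'x set \<Rightarrow> ('x \<Rightarrow> 'x \<Rightarrow> bool) \<Rightarrow> 'x set \<Rightarrow> 'x set set" where
  "lat_Cl L le \<omega> = {atoms_below L le a | a. a \<in> \<omega>}"

definition sigma_coprod ::
  "'x set \<Rightarrow> ('x \<Rightarrow> 'x \<Rightarrow> bool) \<Rightarrow> 'y set \<Rightarrow> ('y \<Rightarrow> 'y \<Rightarrow> bool) \<Rightarrow> ('x \<times> 'y) set set" where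
  "sigma_coprod L1 le1 L2 le2 =
     {R. R \<subset> lat_atoms L1 le1 \<times> lat_atoms L2 le2 \<and>
         (\<forall>p1\<in>lat_atoms L1 le1. \<forall>p2\<in>lat_atoms L2 le2.
            {q1. (q1, p2) \<in> R} \<in> lat_Cl L1 le1 (lat_coatoms L1 le1 \<union> {lat_top L1 le1}) \<and>
            {q2. (p1, q2) \<in> R} \<in> lat_Cl L2 le2 (lat_coatoms L2 le2 \<union> {lat_top L2 le2}))}"

text \<open>\<open>L1 \<circledast> L2\<close>: all intersections of families from \<open>\<Sigma>'_\<circledast> \<union> {\<Sigma>1 \<times> \<Sigma>2}\<close>
  (the empty intersection being \<open>\<Sigma>1 \<times> \<Sigma>2\<close>), ordered by inclusion.\<close>
definition lat_coprod ::
  "'x set \<Rightarrow> ('x \<Rightarrow> 'x \<Rightarrow> bool) \<Rightarrow> 'y set \<Rightarrow> ('y \<Rightarrow> 'y \<Rightarrow> bool) \<Rightarrow> ('x \<times> 'y) set set" where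
  "lat_coprod L1 le1 L2 le2 =
     {(lat_atoms L1 le1 \<times> lat_atoms L2 le2) \<inter> \<Inter>\<omega> | \<omega>.
        \<omega> \<subseteq> sigma_coprod L1 le1 L2 le2 \<union> {lat_atoms L1 le1 \<times> lat_atoms L2 le2}}"

definition subspaces :: "('a::field \<Rightarrow> 'v::ab_group_add \<Rightarrow> 'v) \<Rightarrow> 'v set set" where
  "subspaces s = {S. module.subspace s S}"

definition bilinear_form :: "('a::field \<Rightarrow> 'v::ab_group_add \<Rightarrow> 'v) \<Rightarrow> ('a \<Rightarrow> 'w::ab_group_add \<Rightarrow> 'w) \<Rightarrow> ('v \<Rightarrow> 'w \<Rightarrow> 'a) \<Rightarrow> bool" where
  "bilinear_form s1 s2 \<beta> \<longleftrightarrow>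
     (\<forall>y. Vector_Spaces.linear s1 (*) (\<lambda>x. \<beta> x y)) \<and> (\<forall>x. Vector_Spaces.linear s2 (*) (\<lambda>y. \<beta> x y))"

text \<open>Model of \<open>E1 \<otimes> E2\<close>: the image of the canonical (injective) map
  \<open>E1 \<otimes> E2 \<rightarrow> Bil(E1,E2;K)-dual\<close>, \<open>x \<otimes> y \<mapsto> (\<beta> \<mapsto> \<beta> x y)\<close>, i.e. the span of the
  pure tensors inside the space of functionals (functionals vanish off bilinear forms).\<close>
definition pure_tensor ::
  "('a::field \<Rightarrow> 'v::ab_group_add \<Rightarrow> 'v) \<Rightarrow> ('a \<Rightarrow> 'w::ab_group_add \<Rightarrow> 'w) \<Rightarrow> 'v \<Rightarrow> 'w \<Rightarrow> (('v \<Rightarrow> 'w \<Rightarrow> 'a) \<Rightarrow> 'a)" where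
  "pure_tensor s1 s2 x y = (\<lambda>\<beta>. if bilinear_form s1 s2 \<beta> then \<beta> x y else 0)"

definition fun_scale :: "'a::field \<Rightarrow> ('b \<Rightarrow> 'a) \<Rightarrow> ('b \<Rightarrow> 'a)" where
  "fun_scale c t = (\<lambda>\<beta>. c * t \<beta>)"

definition tensor_space ::
  "('a::field \<Rightarrow> 'v::ab_group_add \<Rightarrow> 'v) \<Rightarrow> ('a \<Rightarrow> 'w::ab_group_add \<Rightarrow> 'w) \<Rightarrow> (('v \<Rightarrow> 'w \<Rightarrow> 'a) \<Rightarrow> 'a) set" where
  "tensor_space s1 s2 = module.span fun_scale {pure_tensor s1 s2 x y | x y. True}"

definition tensor_lines ::
  "('a::field \<Rightarrow> 'v::ab_group_add \<Rightarrow> 'v) \<Rightarrow> ('a \<Rightarrow> 'w::ab_group_add \<Rightarrow> 'w) \<Rightarrow> (('v \<Rightarrow> 'w \<Rightarrow> 'a) \<Rightarrow> 'a) set set" where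
  "tensor_lines s1 s2 =
     {module.span fun_scale {t} | t. t \<in> tensor_space s1 s2 \<and> t \<noteq> 0}"

text \<open>Atoms of \<open>P(E1) \<multimap> P(E2) := (P(E1) \<circledast> P(E2)-op)-op\<close>. P(E) is ordered by inclusion,
  P(E2)-op by reverse inclusion, the \<circledast>-lattice by inclusion, its dual by reverse inclusion.\<close>
definition multimap_atoms ::
  "('a::field \<Rightarrow> 'v::ab_group_add \<Rightarrow> 'v) \<Rightarrow> ('a \<Rightarrow> 'w::ab_group_add \<Rightarrow> 'w) \<Rightarrow> ('v set \<times> 'w set) set set" where
  "multimap_atoms s1 s2 =
     lat_atoms (lat_coprod (subspaces s1) (\<subseteq>) (subspaces s2) (dual_ord (\<subseteq>)))
               (dual_ord (\<subseteq>))"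

end

theory Submission
  imports Defs
begin

definition hyper :: "('a::field \<Rightarrow> 'v::ab_group_add \<Rightarrow> 'v) \<Rightarrow> 'v set \<Rightarrow> bool" where
  "hyper s K \<longleftrightarrow> module.subspace s K \<and> K \<noteq> UNIV \<and>
     (\<forall>T. module.subspace s T \<and> K \<subseteq> T \<and> T \<noteq> K \<longrightarrow> T = UNIV)"

definition line :: "('a::field \<Rightarrow> 'v::ab_group_add \<Rightarrow> 'v) \<Rightarrow> 'v set \<Rightarrow> bool" where
  "line s a \<longleftrightarrow> (\<exists>z. z \<noteq> 0 \<and> a = module.span s {z})"

lemma dual_dual[simp]: "dual_ord (dual_ord le) = le"
  unfolding dual_ord_def by simp

lemma vs_mult: "vector_space ((*) :: 'a::field \<Rightarrow> 'a \<Rightarrow> 'a)"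
  by unfold_locales (auto simp: algebra_simps)

context vector_space
begin

lemma atoms_eq: "lat_atoms (subspaces scale) (\<subseteq>) = {a. line scale a}"
proof (rule set_eqI, rule iffI)
  fix a assume "a \<in> lat_atoms (subspaces scale) (\<subseteq>)"
  then have sa: "subspace a" and ex: "\<exists>x. subspace x \<and> x \<subseteq> a \<and> x \<noteq> a"
    and al: "\<And>x y. subspace x \<Longrightarrow> x \<subseteq> a \<Longrightarrow> x \<noteq> a \<Longrightarrow> subspace y \<Longrightarrow> x \<subseteq> y"
    unfolding lat_atoms_def subspaces_def by auto
  have "a \<noteq> {0}" using ex sa subspace_0 by blast
  then obtain z where z: "z \<in> a" "z \<noteq> 0" using sa subspace_0 by blast
  have sub: "span {z} \<subseteq> a" using z sa by (simp add: span_minimal)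
  have "span {z} = a"
  proof (rule ccontr)
    assume "span {z} \<noteq> a"
    then have "span {z} \<subseteq> {0}" using al[of "span {z}" "{0}"] sub by auto
    then show False using z span_base[of z "{z}"] by auto
  qed
  then show "a \<in> {a. line scale a}" using z unfolding line_def by auto
next
  fix a assume "a \<in> {a. line scale a}"
  then obtain z where z: "z \<noteq> 0" "a = span {z}" unfolding line_def by auto
  have "\<forall>x. subspace x \<and> x \<subseteq> a \<and> x \<noteq> a \<longrightarrow> x \<subseteq> {0}"
  proof (intro allI impI)
    fix x assume x: "subspace x \<and> x \<subseteq> a \<and> x \<noteq> a"
    show "x \<subseteq> {0}"
    proof
      fix y assume y: "y \<in> x"
      then obtain k where k: "y = k *s z" using x z span_singleton by auto
      show "y \<in> {0}"
      proof (rule ccontr)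
        assume "y \<notin> {0}"
        then have "k \<noteq> 0" using k by auto
        then have "z \<in> x" using subspace_scale[of x y "inverse k"] x y k by simp
        then have "a \<subseteq> x" using z x span_minimal by auto
        then show False using x by auto
      qed
    qed
  qed
  moreover have "{0} \<noteq> a" using z span_base[of z "{z}"] by auto
  moreover have "{0} \<subseteq> a" using z span_zero by auto
  ultimately show "a \<in> lat_atoms (subspaces scale) (\<subseteq>)"
    unfolding lat_atoms_def subspaces_def mem_Collect_eq
  proof (intro conjI ballI impI allI)
    show "subspace a" using z by simp
    show "\<exists>x\<in>Collect subspace. x \<subseteq> a \<and> x \<noteq> a"
      using \<open>{0} \<noteq> a\<close> \<open>{0} \<subseteq> a\<close> by (intro bexI[of _ "{0}"]) auto
  next
    fix x y assume "x \<in> Collect subspace" "x \<subseteq> a \<and> x \<noteq> a" "y \<in> Collect subspace"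
    then show "x \<subseteq> y" using \<open>\<forall>x. _\<close> subspace_0 by blast
  qed
qed

lemma hyp_eq: "lat_atoms (subspaces scale) (dual_ord (\<subseteq>)) = {K. hyper scale K}"
proof (rule set_eqI, rule iffI)
  fix K assume "K \<in> lat_atoms (subspaces scale) (dual_ord (\<subseteq>))"
  then have H: "subspace K" "\<exists>x. subspace x \<and> K \<subseteq> x \<and> x \<noteq> K"
    "\<And>x y. subspace x \<Longrightarrow> K \<subseteq> x \<Longrightarrow> x \<noteq> K \<Longrightarrow> subspace y \<Longrightarrow> y \<subseteq> x"
    unfolding lat_atoms_def subspaces_def dual_ord_def by auto
  have U: "\<And>T. subspace T \<Longrightarrow> K \<subseteq> T \<Longrightarrow> T \<noteq> K \<Longrightarrow> T = UNIV"
    using H(3)[OF _ _ _ subspace_UNIV] by blast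
  have "K \<noteq> UNIV" using H(2) by auto
  then show "K \<in> {K. hyper scale K}" unfolding hyper_def using U H(1) by auto
next
  fix K assume "K \<in> {K. hyper scale K}"
  then have H: "subspace K" "K \<noteq> UNIV" "\<And>T. subspace T \<Longrightarrow> K \<subseteq> T \<Longrightarrow> T \<noteq> K \<Longrightarrow> T = UNIV"
    unfolding hyper_def by auto
  show "K \<in> lat_atoms (subspaces scale) (dual_ord (\<subseteq>))"
    unfolding lat_atoms_def subspaces_def dual_ord_def mem_Collect_eq
  proof (intro conjI ballI impI allI)
    show "subspace K" by fact
    show "\<exists>x\<in>Collect subspace. K \<subseteq> x \<and> x \<noteq> K"
      using H(2) by (intro bexI[of _ UNIV]) auto
  next
    fix x y assume "x \<in> Collect subspace" "K \<subseteq> x \<and> x \<noteq> K" "y \<in> Collect subspace"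
    then show "y \<subseteq> x" using H(3)[of x] by auto
  qed
qed

lemma top_eq: "lat_top (subspaces scale) (\<subseteq>) = UNIV"
  unfolding lat_top_def subspaces_def
  by (rule the_equality) (auto, metis subspace_UNIV subsetD UNIV_I)

lemma bot_eq: "lat_top (subspaces scale) (dual_ord (\<subseteq>)) = {0}"
  unfolding lat_top_def subspaces_def dual_ord_def
  by (rule the_equality) (auto dest: subspace_0, metis subspace_single_0 subsetD singletonD)

lemma below_eq: "atoms_below (subspaces scale) (\<subseteq>) H = {a. line scale a \<and> a \<subseteq> H}"
  unfolding atoms_below_def atoms_eq by auto

lemma below_dual_eq: "atoms_below (subspaces scale) (dual_ord (\<subseteq>)) m = {K. hyper scale K \<and> m \<subseteq> K}"
  unfolding atoms_below_def hyp_eq by (auto simp: dual_ord_def)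

lemma line_span: "z \<noteq> 0 \<Longrightarrow> line scale (span {z})"
  unfolding line_def by auto

lemma lineE: "line scale l \<Longrightarrow> (\<And>z. z \<noteq> 0 \<Longrightarrow> l = span {z} \<Longrightarrow> P) \<Longrightarrow> P"
  unfolding line_def by auto

lemma in_span1: "y \<in> span {z} \<longleftrightarrow> (\<exists>k. y = k *s z)"
  by (auto simp: span_singleton)

lemma line_ne0: "line scale l \<Longrightarrow> l \<noteq> {0}"
  by (erule lineE) (use span_base[of _ "{_}"] in fastforce)

lemma line_subspace: "line scale l \<Longrightarrow> subspace l"
  by (erule lineE) simp

lemma hyper_subspace: "hyper scale K \<Longrightarrow> subspace K"
  unfolding hyper_def by simp

lemma sep:
  assumes S: "subspace S" and z: "z \<notin> S"
  shows "\<exists>K. hyper scale K \<and> S \<subseteq> K \<and> z \<notin> K"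
proof -
  obtain B0 where B0: "B0 \<subseteq> S" "independent B0" "S \<subseteq> span B0"
    using maximal_independent_subset by blast
  have "span B0 \<subseteq> S" using B0 S span_minimal by blast
  then have "z \<notin> span B0" using z by blast
  then have ind: "independent (insert z B0)" using B0(2) by (rule independent_insertI)
  interpret P: vector_space_pair scale "(*) :: 'a \<Rightarrow> 'a \<Rightarrow> 'a"
    unfolding vector_space_pair_def using vs_mult vector_space_axioms by auto
  define g where "g = P.construct (insert z B0) (\<lambda>b. if b = z then 1 else 0)"
  have lg: "Vector_Spaces.linear scale (*) g" unfolding g_def using P.linear_construct[OF ind] .
  interpret G: Vector_Spaces.linear scale "(*)" g by fact
  have gz: "g z = 1" unfolding g_def using P.construct_basis[OF ind] by simp
  have gB: "\<And>b. b \<in> B0 \<Longrightarrow> g b = 0"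
  proof -
    fix b assume "b \<in> B0"
    then have "b \<noteq> z" "b \<in> insert z B0" using B0 z by auto
    then show "g b = 0" unfolding g_def using P.construct_basis[OF ind] by simp
  qed
  define K where "K = {x. g x = 0}"
  have SK: "S \<subseteq> K" unfolding K_def using B0(3) G.eq_0_on_span gB by blast
  have zK: "z \<notin> K" unfolding K_def using gz by simp
  have hK: "hyper scale K" unfolding hyper_def
  proof (intro conjI allI impI)
    show "subspace K" unfolding K_def by (rule G.subspace_kernel)
    show "K \<noteq> UNIV" using zK by auto
  next
    fix T assume T: "subspace T \<and> K \<subseteq> T \<and> T \<noteq> K"
    then obtain y where y: "y \<in> T" "g y \<noteq> 0" unfolding K_def by blast
    show "T = UNIV"
    proof (rule set_eqI, rule iffI)
      fix x
      have "g (x - (g x / g y) *s y) = 0" using y by (simp add: G.diff G.scale)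
      then have "x - (g x / g y) *s y \<in> T" using T unfolding K_def by blast
      moreover have "(g x / g y) *s y \<in> T" using T y subspace_scale by blast
      ultimately have "(x - (g x / g y) *s y) + (g x / g y) *s y \<in> T" using T subspace_add by blast
      then show "x \<in> T" by simp
    qed simp
  qed
  show ?thesis using hK SK zK by blast
qed

lemma sep_vec: "w \<notin> span {w'} \<Longrightarrow> \<exists>K. hyper scale K \<and> w' \<in> K \<and> w \<notin> K"
  using sep[of "span {w'}" w] span_base[of w' "{w'}"] by auto

lemma sep0: "w \<noteq> 0 \<Longrightarrow> \<exists>K. hyper scale K \<and> w \<notin> K"
  using sep[of "{0}" w] by auto

end

definition Rel :: "('a::field \<Rightarrow> 'v::ab_group_add \<Rightarrow> 'v) \<Rightarrow> ('a \<Rightarrow> 'w::ab_group_add \<Rightarrow> 'w) \<Rightarrow> ('v \<Rightarrow> 'w) \<Rightarrow> ('v set \<times> 'w set) set" where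
  "Rel s1 s2 u = {(l, K). line s1 l \<and> hyper s2 K \<and> u ` l \<subseteq> K}"

context vector_space_pair
begin

lemma sigma_iff:
  "R \<in> sigma_coprod (subspaces s1) (\<subseteq>) (subspaces s2) (dual_ord (\<subseteq>)) \<longleftrightarrow>
   R \<subset> {l. line s1 l} \<times> {K. hyper s2 K} \<and>
   (\<forall>p1 p2. line s1 p1 \<longrightarrow> hyper s2 p2 \<longrightarrow>
      (\<exists>H. (hyper s1 H \<or> H = UNIV) \<and> {q1. (q1, p2) \<in> R} = {a. line s1 a \<and> a \<subseteq> H}) \<and>
      (\<exists>m. (line s2 m \<or> m = {0}) \<and> {q2. (p1, q2) \<in> R} = {K. hyper s2 K \<and> m \<subseteq> K}))"
proof -
  have e1: "\<And>X. X \<in> lat_Cl (subspaces s1) (\<subseteq>) (lat_coatoms (subspaces s1) (\<subseteq>) \<union> {lat_top (subspaces s1) (\<subseteq>)})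
     \<longleftrightarrow> (\<exists>H. (hyper s1 H \<or> H = UNIV) \<and> X = {a. line s1 a \<and> a \<subseteq> H})"
    unfolding lat_Cl_def lat_coatoms_def vs1.hyp_eq vs1.top_eq vs1.below_eq
    apply (simp only: mem_Collect_eq Un_iff singleton_iff)
    apply (rule iffI; elim exE conjE; rule exI, rule conjI, assumption, assumption)
    done
  have e2: "\<And>X. X \<in> lat_Cl (subspaces s2) (dual_ord (\<subseteq>)) (lat_coatoms (subspaces s2) (dual_ord (\<subseteq>)) \<union> {lat_top (subspaces s2) (dual_ord (\<subseteq>))})
     \<longleftrightarrow> (\<exists>m. (line s2 m \<or> m = {0}) \<and> X = {K. hyper s2 K \<and> m \<subseteq> K})"
    unfolding lat_Cl_def lat_coatoms_def dual_dual vs2.atoms_eq vs2.bot_eq vs2.below_dual_eq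
    apply (simp only: mem_Collect_eq Un_iff singleton_iff)
    apply (rule iffI; elim exE conjE; rule exI, rule conjI, assumption, assumption)
    done
  show ?thesis
    unfolding sigma_coprod_def mem_Collect_eq e1 e2 vs1.atoms_eq vs2.hyp_eq Ball_def by simp
qed

lemma pre_hyper:
  assumes u: "Vector_Spaces.linear s1 s2 u" and K: "hyper s2 K" and ne: "u -` K \<noteq> UNIV"
  shows "hyper s1 (u -` K)"
proof -
  interpret U: Vector_Spaces.linear s1 s2 u by fact
  have sK: "vs2.subspace K" using K unfolding hyper_def by simp
  show ?thesis unfolding hyper_def
  proof (intro conjI allI impI)
    show "vs1.subspace (u -` K)" using U.subspace_vimage sK by blast
    show "u -` K \<noteq> UNIV" by fact
  next
    fix T assume T: "vs1.subspace T \<and> u -` K \<subseteq> T \<and> T \<noteq> u -` K"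
    then obtain x where x: "x \<in> T" "u x \<notin> K" by blast
    let ?S = "vs2.span (insert (u x) K)"
    have KS: "K \<subseteq> ?S" using vs2.span_superset by blast
    have "u x \<in> ?S" using vs2.span_base by blast
    then have "?S \<noteq> K" using x by blast
    then have SU: "?S = UNIV" using K KS unfolding hyper_def by blast
    show "T = UNIV"
    proof (rule set_eqI, rule iffI)
      fix y
      have "u y \<in> ?S" using SU by simp
      then obtain k where "u y - k *b u x \<in> vs2.span K" using vs2.span_breakdown_eq by blast
      then have "u y - k *b u x \<in> K" using sK vs2.span_eq_iff by blast
      then have "u (y - k *a x) \<in> K" by (simp add: U.diff U.scale)
      then have "y - k *a x \<in> T" using T by blast
      moreover have "k *a x \<in> T" using x T vs1.subspace_scale by blast
      ultimately have "(y - k *a x) + k *a x \<in> T" using T vs1.subspace_add by blast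
      then show "y \<in> T" by simp
    qed simp
  qed
qed

lemma image_line:
  assumes u: "Vector_Spaces.linear s1 s2 u"
  shows "u ` vs1.span {z} = vs2.span {u z}"
proof -
  interpret U: Vector_Spaces.linear s1 s2 u by fact
  show ?thesis using U.span_image[of "{z}"] by simp
qed

lemma span_sub_iff: "vs2.subspace K \<Longrightarrow> vs2.span {w} \<subseteq> K \<longleftrightarrow> w \<in> K"
  using vs2.span_minimal[of "{w}" K] vs2.span_base[of w "{w}"] by auto

lemma Rel_sigma:
  assumes u: "Vector_Spaces.linear s1 s2 u" and a0: "u a0 \<noteq> 0"
  shows "Rel s1 s2 u \<in> sigma_coprod (subspaces s1) (\<subseteq>) (subspaces s2) (dual_ord (\<subseteq>))"
  unfolding sigma_iff
proof (intro conjI allI impI)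
  interpret U: Vector_Spaces.linear s1 s2 u by fact
  have "a0 \<noteq> 0" using a0 by auto
  then have l0: "line s1 (vs1.span {a0})" by (rule vs1.line_span)
  obtain K0 where K0: "hyper s2 K0" "u a0 \<notin> K0" using vs2.sep0[OF a0] by blast
  have "(vs1.span {a0}, K0) \<notin> Rel s1 s2 u"
    unfolding Rel_def using K0 vs1.span_base[of a0 "{a0}"] by auto
  moreover have "(vs1.span {a0}, K0) \<in> {l. line s1 l} \<times> {K. hyper s2 K}" using l0 K0 by simp
  moreover have "Rel s1 s2 u \<subseteq> {l. line s1 l} \<times> {K. hyper s2 K}" unfolding Rel_def by auto
  ultimately show "Rel s1 s2 u \<subset> {l. line s1 l} \<times> {K. hyper s2 K}" by blast
next
  fix p1 p2 assume p1: "line s1 p1" and p2: "hyper s2 p2"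
  show "\<exists>H. (hyper s1 H \<or> H = UNIV) \<and> {q1. (q1, p2) \<in> Rel s1 s2 u} = {a. line s1 a \<and> a \<subseteq> H}"
    using pre_hyper[OF u p2] by (intro exI[of _ "u -` p2"]) (auto simp: Rel_def p2)
  obtain z where z: "z \<noteq> 0" "p1 = vs1.span {z}" using p1 by (rule vs1.lineE)
  have m: "line s2 (vs2.span {u z}) \<or> vs2.span {u z} = {0}"
    using vs2.line_span[of "u z"] by (cases "u z = 0") auto
  have "{q2. (p1, q2) \<in> Rel s1 s2 u} = {K. hyper s2 K \<and> vs2.span {u z} \<subseteq> K}"
    unfolding Rel_def z(2) using p1 z by (auto simp: vs2.hyper_subspace image_line[OF u] span_sub_iff)
  then show "\<exists>m. (line s2 m \<or> m = {0}) \<and> {q2. (p1, q2) \<in> Rel s1 s2 u} = {K. hyper s2 K \<and> m \<subseteq> K}"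
    using m by blast
qed

lemma Rel_max:
  assumes u: "Vector_Spaces.linear s1 s2 u"
    and R: "R \<in> sigma_coprod (subspaces s1) (\<subseteq>) (subspaces s2) (dual_ord (\<subseteq>))"
    and sub: "Rel s1 s2 u \<subseteq> R"
  shows "R \<subseteq> Rel s1 s2 u"
proof (rule ccontr)
  interpret U: Vector_Spaces.linear s1 s2 u by fact
  assume "\<not> R \<subseteq> Rel s1 s2 u"
  then obtain l0 K0 where lK0: "(l0, K0) \<in> R" "(l0, K0) \<notin> Rel s1 s2 u" by auto
  have Rs: "R \<subset> {l. line s1 l} \<times> {K. hyper s2 K}" using R unfolding sigma_iff by blast
  have F1: "\<And>p1 p2. line s1 p1 \<Longrightarrow> hyper s2 p2 \<Longrightarrow>
     \<exists>H. (hyper s1 H \<or> H = UNIV) \<and> {q1. (q1, p2) \<in> R} = {a. line s1 a \<and> a \<subseteq> H}"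
    using R unfolding sigma_iff by blast
  have F2: "\<And>p1 p2. line s1 p1 \<Longrightarrow> hyper s2 p2 \<Longrightarrow>
     \<exists>m. (line s2 m \<or> m = {0}) \<and> {q2. (p1, q2) \<in> R} = {K. hyper s2 K \<and> m \<subseteq> K}"
    using R unfolding sigma_iff by blast
  have l0: "line s1 l0" and K0: "hyper s2 K0" using lK0 Rs by auto
  obtain a0 where a0: "a0 \<noteq> 0" "l0 = vs1.span {a0}" using l0 by (rule vs1.lineE)
  define w0 where "w0 = u a0"
  have img0: "u ` l0 = vs2.span {w0}" using image_line[OF u] a0 w0_def by simp
  have sK0: "vs2.subspace K0" using K0 by (rule vs2.hyper_subspace)
  have w0K0: "w0 \<notin> K0" using lK0(2) l0 K0 img0 span_sub_iff[OF sK0] unfolding Rel_def by auto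
  have w0ne: "w0 \<noteq> 0" using w0K0 vs2.subspace_0[OF sK0] by auto
  have RelI: "\<And>l K. line s1 l \<Longrightarrow> hyper s2 K \<Longrightarrow> u ` l \<subseteq> K \<Longrightarrow> (l, K) \<in> R"
    using sub unfolding Rel_def by auto
  have st1: "(l0, K) \<in> R" if K: "hyper s2 K" for K
  proof -
    obtain m where m: "line s2 m \<or> m = {0}" "{q2. (l0, q2) \<in> R} = {K. hyper s2 K \<and> m \<subseteq> K}"
      using F2[OF l0 K0] by blast
    have Fm: "\<And>K. (l0, K) \<in> R \<longleftrightarrow> hyper s2 K \<and> m \<subseteq> K"
      using m(2) unfolding set_eq_iff mem_Collect_eq by blast
    have mK0: "m \<subseteq> K0" using Fm lK0(1) by blast
    have "m \<subseteq> {0}"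
    proof
      fix y assume y: "y \<in> m"
      have yw: "y \<in> vs2.span {w0}"
      proof (rule ccontr)
        assume "y \<notin> vs2.span {w0}"
        then obtain K' where K': "hyper s2 K'" "w0 \<in> K'" "y \<notin> K'" using vs2.sep_vec by blast
        have "u ` l0 \<subseteq> K'" using img0 span_sub_iff[OF vs2.hyper_subspace[OF K'(1)]] K'(2) by simp
        then have "(l0, K') \<in> R" using RelI l0 K'(1) by blast
        then have "m \<subseteq> K'" using Fm by blast
        then show False using y K'(3) by blast
      qed
      then obtain k where k: "y = k *b w0" using vs2.in_span1 by blast
      have yK0: "y \<in> K0" using y mK0 by blast
      show "y \<in> {0}"
      proof (rule ccontr)
        assume "y \<notin> {0}"
        then have "k \<noteq> 0" using k by auto
        then have "w0 = inverse k *b y" using k by simp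
        then have "w0 \<in> K0" using yK0 vs2.subspace_scale[OF sK0] by metis
        then show False using w0K0 by blast
      qed
    qed
    have "m = {0}"
    proof (cases "line s2 m")
      case True
      then have "m \<noteq> {0}" by (rule vs2.line_ne0)
      moreover have "0 \<in> m" using vs2.subspace_0[OF vs2.line_subspace[OF True]] .
      ultimately show ?thesis using \<open>m \<subseteq> {0}\<close> by blast
    qed (use m(1) in blast)
    then show "(l0, K) \<in> R" using Fm K vs2.subspace_0[OF vs2.hyper_subspace[OF K]] by blast
  qed
  have st2: "(l, K) \<in> R" if l: "line s1 l" and K: "hyper s2 K" and wK: "w0 \<notin> K" for l K
  proof -
    obtain H where H: "hyper s1 H \<or> H = UNIV" "{q1. (q1, K) \<in> R} = {a. line s1 a \<and> a \<subseteq> H}"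
      using F1[OF l0 K] by blast
    have FH: "\<And>a. (a, K) \<in> R \<longleftrightarrow> line s1 a \<and> a \<subseteq> H"
      using H(2) unfolding set_eq_iff mem_Collect_eq by blast
    have "H = UNIV"
    proof (rule ccontr)
      assume HU: "H \<noteq> UNIV"
      then have hH: "hyper s1 H" using H(1) by blast
      have a0K: "a0 \<notin> u -` K" using wK w0_def by simp
      then have "u -` K \<noteq> UNIV" by blast
      then have hp: "hyper s1 (u -` K)" using pre_hyper[OF u K] by blast
      have sub1: "u -` K \<subseteq> H"
      proof
        fix y assume y: "y \<in> u -` K"
        show "y \<in> H"
        proof (cases "y = 0")
          case True then show ?thesis using vs1.subspace_0[OF vs1.hyper_subspace[OF hH]] by simp
        next
          case False
          have "u ` vs1.span {y} \<subseteq> K"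
            using image_line[OF u] span_sub_iff[OF vs2.hyper_subspace[OF K]] y by simp
          then have "(vs1.span {y}, K) \<in> R" using RelI vs1.line_span[OF False] K by blast
          then have "vs1.span {y} \<subseteq> H" using FH by blast
          then show ?thesis using vs1.span_base[of y "{y}"] by blast
        qed
      qed
      have "l0 \<subseteq> H" using FH st1[OF K] by blast
      then have "a0 \<in> H" using a0(2) vs1.span_base[of a0 "{a0}"] by blast
      then have "H \<noteq> u -` K" using a0K by blast
      then have "H = UNIV" using hp sub1 vs1.hyper_subspace[OF hH] unfolding hyper_def by blast
      then show False using HU by blast
    qed
    then show "(l, K) \<in> R" using FH l by blast
  qed
  have st3: "(l, K) \<in> R" if l: "line s1 l" and K: "hyper s2 K" for l K
  proof -
    obtain m where m: "line s2 m \<or> m = {0}" "{q2. (l, q2) \<in> R} = {K. hyper s2 K \<and> m \<subseteq> K}"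
      using F2[OF l K] by blast
    have Fm: "\<And>K. (l, K) \<in> R \<longleftrightarrow> hyper s2 K \<and> m \<subseteq> K"
      using m(2) unfolding set_eq_iff mem_Collect_eq by blast
    have "m = {0}"
    proof (rule ccontr)
      assume "m \<noteq> {0}"
      then have "line s2 m" using m(1) by blast
      then obtain z where z: "z \<noteq> 0" "m = vs2.span {z}" by (rule vs2.lineE)
      have "\<exists>K'. hyper s2 K' \<and> w0 \<notin> K' \<and> z \<notin> K'"
      proof (cases "z \<in> vs2.span {w0}")
        case True
        then obtain k where k: "z = k *b w0" using vs2.in_span1 by blast
        obtain K' where K': "hyper s2 K'" "w0 \<notin> K'" using vs2.sep0[OF w0ne] by blast
        have "k \<noteq> 0" using z k by auto
        have "z \<notin> K'"
        proof
          assume "z \<in> K'"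
          then have "inverse k *b z \<in> K'" using vs2.subspace_scale[OF vs2.hyper_subspace[OF K'(1)]] by blast
          then show False using k \<open>k \<noteq> 0\<close> K'(2) by simp
        qed
        then show ?thesis using K' by blast
      next
        case False
        have "w0 \<notin> vs2.span {z - w0}"
        proof
          assume "w0 \<in> vs2.span {z - w0}"
          then obtain k where k: "w0 = k *b (z - w0)" using vs2.in_span1 by blast
          have "k \<noteq> 0" using k w0ne by auto
          have k': "w0 = k *b z - k *b w0" using k by (simp add: vs2.scale_right_diff_distrib)
          have "w0 + k *b w0 = (k *b z - k *b w0) + k *b w0"
            using k' by (rule arg_cong[where f="\<lambda>x. x + k *b w0"])
          also have "\<dots> = k *b z" by simp
          finally have e: "(1 + k) *b w0 = k *b z" by (simp add: vs2.scale_left_distrib)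
          have "z = inverse k *b (k *b z)" using \<open>k \<noteq> 0\<close> by simp
          also have "\<dots> = (inverse k * (1 + k)) *b w0" using e[symmetric] by simp
          finally have "z \<in> vs2.span {w0}" using vs2.in_span1 by blast
          then show False using False by blast
        qed
        then obtain K' where K': "hyper s2 K'" "z - w0 \<in> K'" "w0 \<notin> K'" using vs2.sep_vec by blast
        have "z \<notin> K'"
        proof
          assume "z \<in> K'"
          then have "z - (z - w0) \<in> K'"
            using K'(2) vs2.subspace_diff[OF vs2.hyper_subspace[OF K'(1)]] by blast
          then show False using K'(3) by simp
        qed
        then show ?thesis using K' by blast
      qed
      then obtain K' where K': "hyper s2 K'" "w0 \<notin> K'" "z \<notin> K'" by blast
      have "(l, K') \<in> R" using st2 l K' by blast
      then have "m \<subseteq> K'" using Fm by blast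
      then show False using z(2) vs2.span_base[of z "{z}"] K'(3) by blast
    qed
    then show "(l, K) \<in> R" using Fm K vs2.subspace_0[OF vs2.hyper_subspace[OF K]] by blast
  qed
  then have "{l. line s1 l} \<times> {K. hyper s2 K} \<subseteq> R" by blast
  then show False using Rs by blast
qed

lemma Rel_atom:
  assumes u: "Vector_Spaces.linear s1 s2 u" and a0: "u a0 \<noteq> 0"
  shows "Rel s1 s2 u \<in> multimap_atoms s1 s2"
proof -
  define S where "S = {l. line s1 l} \<times> {K. hyper s2 K}"
  define SC where "SC = sigma_coprod (subspaces s1) (\<subseteq>) (subspaces s2) (dual_ord (\<subseteq>))"
  have inC: "\<And>X. X \<in> lat_coprod (subspaces s1) (\<subseteq>) (subspaces s2) (dual_ord (\<subseteq>)) \<longleftrightarrow>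
     (\<exists>\<omega>. X = S \<inter> \<Inter>\<omega> \<and> \<omega> \<subseteq> SC \<union> {S})"
    unfolding lat_coprod_def vs1.atoms_eq vs2.hyp_eq S_def SC_def by (simp only: mem_Collect_eq)
  have atomI: "\<And>a L. a \<in> L \<Longrightarrow> (\<exists>x\<in>L. a \<subseteq> x \<and> x \<noteq> a) \<Longrightarrow>
     (\<And>x y. x \<in> L \<Longrightarrow> a \<subseteq> x \<Longrightarrow> x \<noteq> a \<Longrightarrow> y \<in> L \<Longrightarrow> y \<subseteq> x) \<Longrightarrow> a \<in> lat_atoms L (dual_ord (\<subseteq>))"
    unfolding lat_atoms_def dual_ord_def by blast
  have RS: "Rel s1 s2 u \<in> SC" unfolding SC_def by (rule Rel_sigma[OF u a0])
  then have Rsub: "Rel s1 s2 u \<subset> S" unfolding SC_def S_def sigma_iff by blast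
  have SinC: "S \<in> lat_coprod (subspaces s1) (\<subseteq>) (subspaces s2) (dual_ord (\<subseteq>))"
    unfolding inC by (rule exI[of _ "{}"]) simp
  have yS: "y \<subseteq> S" if "y \<in> lat_coprod (subspaces s1) (\<subseteq>) (subspaces s2) (dual_ord (\<subseteq>))" for y
    using that unfolding inC by blast
  show ?thesis unfolding multimap_atoms_def
  proof (rule atomI)
    show "Rel s1 s2 u \<in> lat_coprod (subspaces s1) (\<subseteq>) (subspaces s2) (dual_ord (\<subseteq>))"
      unfolding inC using RS Rsub by (intro exI[of _ "{Rel s1 s2 u}"]) auto
    show "\<exists>x\<in>lat_coprod (subspaces s1) (\<subseteq>) (subspaces s2) (dual_ord (\<subseteq>)). Rel s1 s2 u \<subseteq> x \<and> x \<noteq> Rel s1 s2 u"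
      using SinC Rsub by blast
  next
    fix x y
    assume x: "x \<in> lat_coprod (subspaces s1) (\<subseteq>) (subspaces s2) (dual_ord (\<subseteq>))"
      and Rx: "Rel s1 s2 u \<subseteq> x" and xR: "x \<noteq> Rel s1 s2 u"
      and y: "y \<in> lat_coprod (subspaces s1) (\<subseteq>) (subspaces s2) (dual_ord (\<subseteq>))"
    obtain \<omega> where w: "x = S \<inter> \<Inter>\<omega>" "\<omega> \<subseteq> SC \<union> {S}" using x unfolding inC by blast
    have "S \<subseteq> R'" if R': "R' \<in> \<omega>" for R'
    proof (cases "R' = S")
      case False
      then have "R' \<in> SC" using R' w(2) by blast
      moreover have "Rel s1 s2 u \<subseteq> R'" using Rx w(1) R' by blast
      ultimately have "R' \<subseteq> Rel s1 s2 u" using Rel_max[OF u] unfolding SC_def by blast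
      then have "x \<subseteq> Rel s1 s2 u" using w(1) R' by blast
      then show ?thesis using Rx xR by blast
    qed simp
    then have "S \<subseteq> x" using w(1) by blast
    then show "y \<subseteq> x" using yS[OF y] by blast
  qed
qed

lemma prop_maps:
  assumes u: "Vector_Spaces.linear s1 s2 u" and v: "Vector_Spaces.linear s1 s2 v"
    and pw: "\<And>x. v x \<in> vs2.span {u x}"
  shows "\<exists>c. \<forall>x. v x = c *b u x"
proof (cases "\<forall>x. u x = 0")
  case True
  then have "\<And>x. v x = 0" using pw by simp
  then show ?thesis by (intro exI[of _ 0]) simp
next
  case False
  interpret U: Vector_Spaces.linear s1 s2 u by fact
  interpret V: Vector_Spaces.linear s1 s2 v by fact
  obtain x0 where x0: "u x0 \<noteq> 0" using False by blast
  obtain c where c: "v x0 = c *b u x0" using pw[of x0] vs2.in_span1 by blast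
  have "v y = c *b u y" for y
  proof -
    obtain d where d: "v y = d *b u y" using pw[of y] vs2.in_span1 by blast
    show ?thesis
    proof (cases "u y \<in> vs2.span {u x0}")
      case True
      then obtain e where e: "u y = e *b u x0" using vs2.in_span1 by blast
      have "u (y - e *a x0) = 0" using e by (simp add: U.diff U.scale)
      then have "v (y - e *a x0) = 0" using pw[of "y - e *a x0"] by simp
      then have "v y = e *b v x0" by (simp add: V.diff V.scale)
      then show ?thesis using c e by (simp add: mult.commute)
    next
      case False
      obtain f where f: "v (x0 + y) = f *b u (x0 + y)" using pw vs2.in_span1 by blast
      have eq: "f *b u x0 + f *b u y = c *b u x0 + d *b u y"
        using f c d by (simp add: U.add V.add vs2.scale_right_distrib)
      have eq2: "(f - c) *b u x0 = (d - f) *b u y"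
        using eq by (simp add: vs2.scale_left_diff_distrib algebra_simps)
      have "d = f"
      proof (rule ccontr)
        assume "d \<noteq> f"
        then have "u y = inverse (d - f) *b ((d - f) *b u y)" by simp
        also have "\<dots> = (inverse (d - f) * (f - c)) *b u x0" using eq2[symmetric] by simp
        finally have "u y \<in> vs2.span {u x0}" using vs2.in_span1 by blast
        then show False using False by blast
      qed
      then have "(f - c) *b u x0 = 0" using eq2 by simp
      then have "f = c" using x0 by simp
      then show ?thesis using d \<open>d = f\<close> by simp
    qed
  qed
  then show ?thesis by blast
qed

lemma Rel_inj:
  assumes u: "Vector_Spaces.linear s1 s2 u" and v: "Vector_Spaces.linear s1 s2 v"
    and eq: "Rel s1 s2 u = Rel s1 s2 v"
  shows "\<exists>c. \<forall>x. v x = c *b u x"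
proof (rule prop_maps[OF u v])
  interpret U: Vector_Spaces.linear s1 s2 u by fact
  interpret V: Vector_Spaces.linear s1 s2 v by fact
  fix x show "v x \<in> vs2.span {u x}"
  proof (cases "x = 0")
    case True then show ?thesis using vs2.span_zero by simp
  next
    case False
    show ?thesis
    proof (rule ccontr)
      assume "v x \<notin> vs2.span {u x}"
      then obtain K where K: "hyper s2 K" "u x \<in> K" "v x \<notin> K" using vs2.sep_vec by blast
      have sK: "vs2.subspace K" using K(1) by (rule vs2.hyper_subspace)
      have "(vs1.span {x}, K) \<in> Rel s1 s2 u"
        unfolding Rel_def using K vs1.line_span[OF False] image_line[OF u] span_sub_iff[OF sK] by simp
      moreover have "(vs1.span {x}, K) \<notin> Rel s1 s2 v"
        unfolding Rel_def using K image_line[OF v] span_sub_iff[OF sK] by simp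
      ultimately show False using eq by simp
    qed
  qed
qed

end

lemma vs_fun: "vector_space (fun_scale :: 'a::field \<Rightarrow> ('b \<Rightarrow> 'a) \<Rightarrow> ('b \<Rightarrow> 'a))"
  by unfold_locales (auto simp: fun_scale_def algebra_simps fun_eq_iff)

lemma linear_mult_right:
  assumes "Vector_Spaces.linear s (*) f"
  shows "Vector_Spaces.linear s (*) (\<lambda>x. f x * (c::'a::field))"
  using assms unfolding Vector_Spaces.linear_iff by (auto simp: algebra_simps)

lemma linear_mult_left:
  assumes "Vector_Spaces.linear s (*) f"
  shows "Vector_Spaces.linear s (*) (\<lambda>x. (c::'a::field) * f x)"
  using assms unfolding Vector_Spaces.linear_iff by (auto simp: algebra_simps)

locale tens = V1: finite_dimensional_vector_space s1 B1 + V2: finite_dimensional_vector_space s2 B2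
  for s1 :: "'a::field \<Rightarrow> 'v::ab_group_add \<Rightarrow> 'v" (infixr \<open>*a\<close> 75) and B1
  and s2 :: "'a \<Rightarrow> 'w::ab_group_add \<Rightarrow> 'w" (infixr \<open>*b\<close> 75) and B2
begin

sublocale P: vector_space_pair s1 s2 ..

sublocale FS: vector_space "fun_scale :: 'a \<Rightarrow> (('v \<Rightarrow> 'w \<Rightarrow> 'a) \<Rightarrow> 'a) \<Rightarrow> _"
  by (rule vs_fun)

definition r1 where "r1 x b = V1.representation B1 x b"
definition r2 where "r2 y b = V2.representation B2 y b"
definition bb where "bb b1 b2 = (\<lambda>x y. r1 x b1 * r2 y b2)"

lemma lin_r1: "Vector_Spaces.linear s1 (*) (\<lambda>x. r1 x b)"
  unfolding r1_def using V1.linear_representation[OF V1.independent_Basis V1.span_Basis] .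

lemma lin_r2: "Vector_Spaces.linear s2 (*) (\<lambda>x. r2 x b)"
  unfolding r2_def using V2.linear_representation[OF V2.independent_Basis V2.span_Basis] .

lemma bil_bb: "bilinear_form s1 s2 (bb b1 b2)"
  unfolding bilinear_form_def bb_def
  using linear_mult_right[OF lin_r1] linear_mult_left[OF lin_r2] by blast

lemma expand1: "x = (\<Sum>b\<in>B1. r1 x b *a b)"
  unfolding r1_def using V1.sum_representation_eq[OF V1.independent_Basis _ V1.finite_Basis] V1.span_Basis
  by simp

lemma expand2: "y = (\<Sum>b\<in>B2. r2 y b *b b)"
  unfolding r2_def using V2.sum_representation_eq[OF V2.independent_Basis _ V2.finite_Basis] V2.span_Basis
  by simp

lemma bil_lin1:
  assumes "bilinear_form s1 s2 \<beta>"
  shows "\<beta> x y = (\<Sum>b1\<in>B1. r1 x b1 * \<beta> b1 y)"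
proof -
  interpret L1: Vector_Spaces.linear s1 "(*)" "\<lambda>x. \<beta> x y" using assms unfolding bilinear_form_def by blast
  have "\<beta> x y = \<beta> (\<Sum>b\<in>B1. r1 x b *a b) y"
    by (rule arg_cong[where f="\<lambda>z. \<beta> z y"], rule expand1)
  also have "\<dots> = (\<Sum>b1\<in>B1. r1 x b1 * \<beta> b1 y)"
    by (simp only: L1.sum L1.scale)
  finally show ?thesis .
qed
lemma bil_lin2:
  assumes "bilinear_form s1 s2 \<beta>"
  shows "\<beta> x y = (\<Sum>b2\<in>B2. r2 y b2 * \<beta> x b2)"
proof -
  interpret L2: Vector_Spaces.linear s2 "(*)" "\<lambda>y. \<beta> x y" using assms unfolding bilinear_form_def by blast
  have "\<beta> x y = \<beta> x (\<Sum>b\<in>B2. r2 y b *b b)"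
    by (rule arg_cong[where f="\<lambda>z. \<beta> x z"], rule expand2)
  also have "\<dots> = (\<Sum>b2\<in>B2. r2 y b2 * \<beta> x b2)"
    by (simp only: L2.sum L2.scale)
  finally show ?thesis .
qed
lemma bil_expand:
  assumes "bilinear_form s1 s2 \<beta>"
  shows "\<beta> x y = (\<Sum>b1\<in>B1. \<Sum>b2\<in>B2. \<beta> b1 b2 * (r1 x b1 * r2 y b2))"
proof -
  have "\<beta> x y = (\<Sum>b1\<in>B1. r1 x b1 * \<beta> b1 y)" by (rule bil_lin1[OF assms])
  also have "\<dots> = (\<Sum>b1\<in>B1. \<Sum>b2\<in>B2. \<beta> b1 b2 * (r1 x b1 * r2 y b2))"
  proof (rule sum.cong[OF refl])
    fix b1
    have "r1 x b1 * \<beta> b1 y = r1 x b1 * (\<Sum>b2\<in>B2. r2 y b2 * \<beta> b1 b2)"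
      using bil_lin2[OF assms, of b1 y] by simp
    also have "\<dots> = (\<Sum>b2\<in>B2. r1 x b1 * (r2 y b2 * \<beta> b1 b2))"
      by (rule sum_distrib_left)
    also have "\<dots> = (\<Sum>b2\<in>B2. \<beta> b1 b2 * (r1 x b1 * r2 y b2))"
      by (rule sum.cong[OF refl]) (simp add: ac_simps)
    finally show "r1 x b1 * \<beta> b1 y = (\<Sum>b2\<in>B2. \<beta> b1 b2 * (r1 x b1 * r2 y b2))" .
  qed
  finally show ?thesis .
qed
definition Pt where "Pt t \<longleftrightarrow> (\<forall>\<beta>. \<not> bilinear_form s1 s2 \<beta> \<longrightarrow> t \<beta> = 0) \<and>
   (\<forall>\<beta>. bilinear_form s1 s2 \<beta> \<longrightarrow> t \<beta> = (\<Sum>b1\<in>B1. \<Sum>b2\<in>B2. \<beta> b1 b2 * t (bb b1 b2)))"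

lemma Pt_tensor:
  assumes "t \<in> tensor_space s1 s2"
  shows "Pt t"
proof -
  have "t \<in> FS.span {pure_tensor s1 s2 x y | x y. True}" using assms unfolding tensor_space_def .
  then show ?thesis
  proof (induction rule: FS.span_induct)
    case base
    show ?case
    proof (rule FS.subspaceI)
      show "0 \<in> Collect Pt" unfolding Pt_def by simp
    next
      fix x y assume "x \<in> Collect Pt" "y \<in> Collect Pt"
      then show "x + y \<in> Collect Pt" unfolding Pt_def by (simp add: sum.distrib distrib_left)
    next
      fix c x assume "x \<in> Collect Pt"
      then show "fun_scale c x \<in> Collect Pt" unfolding Pt_def fun_scale_def
        by (simp add: sum_distrib_left algebra_simps)
    qed
  next
    case (step t)
    then obtain x y where t: "t = pure_tensor s1 s2 x y" by blast
    show ?case unfolding Pt_def t pure_tensor_def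
    proof (intro conjI allI impI)
      fix \<beta> assume b: "bilinear_form s1 s2 \<beta>"
      show "(if bilinear_form s1 s2 \<beta> then \<beta> x y else 0) =
        (\<Sum>b1\<in>B1. \<Sum>b2\<in>B2. \<beta> b1 b2 * (if bilinear_form s1 s2 (bb b1 b2) then bb b1 b2 x y else 0))"
        using bil_expand[OF b, of x y] bil_bb b by (simp add: bb_def)
    qed simp
  qed
qed

definition M where "M t b1 b2 = t (bb b1 b2)"

lemma M_zero:
  assumes "t \<in> tensor_space s1 s2" and "\<And>b1 b2. b1 \<in> B1 \<Longrightarrow> b2 \<in> B2 \<Longrightarrow> M t b1 b2 = 0"
  shows "t = 0"
proof
  fix \<beta>
  show "t \<beta> = 0 \<beta>"
    using Pt_tensor[OF assms(1)] assms(2) unfolding Pt_def M_def by (cases "bilinear_form s1 s2 \<beta>") auto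
qed

definition ut where "ut t = P.construct B1 (\<lambda>b1. \<Sum>b2\<in>B2. M t b1 b2 *b b2)"

lemma lin_ut: "Vector_Spaces.linear s1 s2 (ut t)"
  unfolding ut_def by (rule P.linear_construct[OF V1.independent_Basis])

lemma ut_basis: "b1 \<in> B1 \<Longrightarrow> ut t b1 = (\<Sum>b2\<in>B2. M t b1 b2 *b b2)"
  unfolding ut_def by (rule P.construct_basis[OF V1.independent_Basis])

lemma ut_scale: "ut (fun_scale k t) x = k *b ut t x"
proof -
  have "ut (fun_scale k t) = P.construct B1 (\<lambda>b1. k *b (\<Sum>b2\<in>B2. M t b1 b2 *b b2))"
    unfolding ut_def by (rule P.construct_cong) (simp add: M_def fun_scale_def V2.scale_sum_right)
  then show ?thesis unfolding ut_def using P.construct_scale[OF V1.independent_Basis] by simp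
qed

lemma indep_coeffs:
  assumes "(\<Sum>b\<in>B2. f b *b b) = (\<Sum>b\<in>B2. g b *b b)" and "b \<in> B2"
  shows "f b = g b"
proof -
  have "(\<Sum>b\<in>B2. (f b - g b) *b b) = 0"
    using assms(1) by (simp add: V2.scale_left_diff_distrib sum_subtractf)
  then have "f b - g b = 0"
    using V2.independentD[where u="\<lambda>b. f b - g b", OF V2.independent_Basis V2.finite_Basis subset_refl _ assms(2)] by simp
  then show ?thesis by simp
qed

lemma ut_nonzero:
  assumes "t \<in> tensor_space s1 s2" "t \<noteq> 0"
  shows "\<exists>a. ut t a \<noteq> 0"
proof (rule ccontr)
  assume "\<not> (\<exists>a. ut t a \<noteq> 0)"
  then have z: "\<And>a. ut t a = 0" by blast
  have "M t b1 b2 = 0" if "b1 \<in> B1" "b2 \<in> B2" for b1 b2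
  proof -
    have "(\<Sum>b\<in>B2. M t b1 b *b b) = (\<Sum>b\<in>B2. 0 *b b)" using z[of b1] ut_basis[OF that(1)] by simp
    then show ?thesis using indep_coeffs[where f="M t b1" and g="\<lambda>_. 0", OF _ that(2)] by simp
  qed
  then show False using M_zero assms by blast
qed

lemma ut_inj:
  assumes t: "t \<in> tensor_space s1 s2" and t': "t' \<in> tensor_space s1 s2"
    and eq: "\<And>x. ut t' x = c *b ut t x"
  shows "t' = fun_scale c t"
proof -
  have "M t' b1 b2 = c * M t b1 b2" if "b1 \<in> B1" "b2 \<in> B2" for b1 b2
  proof -
    have "(\<Sum>b\<in>B2. M t' b1 b *b b) = (\<Sum>b\<in>B2. (c * M t b1 b) *b b)"
      using eq[of b1] ut_basis[OF that(1)] by (simp add: V2.scale_sum_right)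
    then show ?thesis using indep_coeffs[where f="M t' b1" and g="\<lambda>b. c * M t b1 b", OF _ that(2)] by simp
  qed
  moreover have "t' - fun_scale c t \<in> tensor_space s1 s2"
    using t t' unfolding tensor_space_def by (intro FS.span_diff FS.span_scale)
  ultimately have "t' - fun_scale c t = 0"
    by (intro M_zero) (auto simp: M_def fun_scale_def)
  then show ?thesis by simp
qed


definition fmap where
  "fmap L = {(l, K). line s1 l \<and> hyper s2 K \<and> (\<forall>t\<in>L. ut t ` l \<subseteq> K)}"

lemma fmap_span: "fmap (FS.span {t0}) = Rel s1 s2 (ut t0)"
proof -
  have key: "(\<forall>t\<in>range (\<lambda>k. fun_scale k t0). ut t ` l \<subseteq> K) \<longleftrightarrow> ut t0 ` l \<subseteq> K"
    if K: "hyper s2 K" for l K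
  proof
    assume "\<forall>t\<in>range (\<lambda>k. fun_scale k t0). ut t ` l \<subseteq> K"
    then have "ut (fun_scale 1 t0) ` l \<subseteq> K" by blast
    then show "ut t0 ` l \<subseteq> K" by simp
  next
    assume H: "ut t0 ` l \<subseteq> K"
    show "\<forall>t\<in>range (\<lambda>k. fun_scale k t0). ut t ` l \<subseteq> K"
    proof (clarsimp)
      fix k a assume "a \<in> l"
      then have "ut t0 a \<in> K" using H by blast
      then show "ut (fun_scale k t0) a \<in> K"
        using ut_scale V2.subspace_scale[OF V2.hyper_subspace[OF K]] by simp
    qed
  qed
  have eqs: "\<And>l K. (line s1 l \<and> hyper s2 K \<and> (\<forall>t\<in>range (\<lambda>k. fun_scale k t0). ut t ` l \<subseteq> K)) \<longleftrightarrow>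
      (line s1 l \<and> hyper s2 K \<and> ut t0 ` l \<subseteq> K)"
    using key by blast
  show ?thesis unfolding fmap_def Rel_def FS.span_singleton by (simp only: eqs)
qed

lemma span_sub:
  assumes t: "t \<in> tensor_space s1 s2" and t': "t' \<in> tensor_space s1 s2"
    and eq: "Rel s1 s2 (ut t) = Rel s1 s2 (ut t')"
  shows "FS.span {t'} \<subseteq> FS.span {t}"
proof -
  obtain c where c: "\<And>x. ut t' x = c *b ut t x" using P.Rel_inj[OF lin_ut lin_ut eq] by blast
  have "t' = fun_scale c t" using ut_inj[OF t t' c] .
  then have "t' \<in> FS.span {t}" using FS.span_scale[OF FS.span_base[of t "{t}"]] by simp
  then show ?thesis using FS.span_minimal[of "{t'}" "FS.span {t}"] by simp
qed

lemma main: "\<exists>f. inj_on f (tensor_lines s1 s2) \<and> f ` tensor_lines s1 s2 \<subseteq> multimap_atoms s1 s2"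
proof (intro exI conjI)
  have TL: "\<And>L. L \<in> tensor_lines s1 s2 \<Longrightarrow> \<exists>t. t \<in> tensor_space s1 s2 \<and> t \<noteq> 0 \<and> L = FS.span {t}"
    unfolding tensor_lines_def by blast
  show "inj_on fmap (tensor_lines s1 s2)"
  proof (rule inj_onI)
    fix L L' assume L: "L \<in> tensor_lines s1 s2" and L': "L' \<in> tensor_lines s1 s2" and eq: "fmap L = fmap L'"
    obtain t where t: "t \<in> tensor_space s1 s2" "L = FS.span {t}" using TL[OF L] by blast
    obtain t' where t': "t' \<in> tensor_space s1 s2" "L' = FS.span {t'}" using TL[OF L'] by blast
    have e: "Rel s1 s2 (ut t) = Rel s1 s2 (ut t')" using eq t(2) t'(2) fmap_span by simp
    show "L = L'" using span_sub[OF t(1) t'(1) e] span_sub[OF t'(1) t(1) e[symmetric]] t(2) t'(2) by blast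
  qed
  show "fmap ` tensor_lines s1 s2 \<subseteq> multimap_atoms s1 s2"
  proof
    fix X assume "X \<in> fmap ` tensor_lines s1 s2"
    then obtain L where L: "L \<in> tensor_lines s1 s2" "X = fmap L" by blast
    obtain t where t: "t \<in> tensor_space s1 s2" "t \<noteq> 0" "L = FS.span {t}" using TL[OF L(1)] by blast
    obtain a where "ut t a \<noteq> 0" using ut_nonzero[OF t(1,2)] by blast
    then have "Rel s1 s2 (ut t) \<in> multimap_atoms s1 s2" by (rule P.Rel_atom[OF lin_ut])
    then show "X \<in> multimap_atoms s1 s2" using L(2) t(3) fmap_span by simp
  qed
qed
end

theorem theorem8p6:
  fixes s1 :: "'a::field \<Rightarrow> 'v::ab_group_add \<Rightarrow> 'v" and s2 :: "'a \<Rightarrow> 'w::ab_group_add \<Rightarrow> 'w"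
    and B1 :: "'v set" and B2 :: "'w set" and n :: nat
  assumes "finite_dimensional_vector_space s1 B1"
    and "finite_dimensional_vector_space s2 B2"
    and "vector_space.dim s1 UNIV = n"
    and "vector_space.dim s2 UNIV = n"
  shows "\<exists>f. inj_on f (tensor_lines s1 s2) \<and> f ` tensor_lines s1 s2 \<subseteq> multimap_atoms s1 s2"
proof -
  interpret T: tens s1 B1 s2 B2 using assms(1,2) by (simp add: tens_def)
  show ?thesis by (rule T.main)
qed

end
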